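(* Let $\sigma$ be an erasing $k$-block substitution with $w_\epsilon\ne 1^k$. Then $f_\sigma$ is continuous at every point of $$\mathcal C^\sigma=\mathbb I\setminus(\mathcal Q_2^0\cup\mathcal E^\sigma),$$ whose complement is countable, and consequently $f_\sigma$ is of Baire class 1. Moreover, $f_\sigma$ is left-continuous at every point of $\mathbb Q_2\setminus\{0\}$.
   Context: Notation: $\mathbb I=[0,1]$. $\mathbb Q_2$ is the set of dyadic rationals in $\mathbb I$, $\mathcal Q_2=\mathbb Q_2\setminus\{0,1\}$ and $\mathcal Q_2^0=\mathcal Q_2\cup\{0\}$. $\{0,1\}^*$ and $\{0,1\}^\omega$ denote finite and infinite binary words, and $\epsilon$ is the empty word. For a word $w$, set $0.w=\sum_i w_i2^{-i}$. For $x\in(0,1]$, $\widetilde x$ is the unique infinite binary expansion of $x$ not ending in $0^\infty$. Fix $k\ge2$. An erasing $k$-block substitution is a map $\sigma:\{0,1\}^k\to\{0,1\}^*$ with exactly one block $w_\epsilon$ such that $\sigma(w_\epsilon)=\epsilon$. It acts blockwise on infinite words and on finite words of length a multiple of $k$, by concatenating the images of consecutive $k$-blocks. The map $f_\sigma:\mathbb I\to\mathbb I$ is defined by $f_\sigma(x)=0.\sigma(\widetilde x)$ if $x\in(0,1]$ and $\widetilde x\ne w_\epsilon^\infty$, and $f_\sigma(x)=0$ if $x=0$ or $\widetilde x=w_\epsilon^\infty$. Define $\mathcal E^\sigma=\{x\in\mathbb I\cap\mathbb Q: x=0.vw_\epsilon^\infty \text{ for some } v\in\{0,1\}^{nk},\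 n\in\mathbb N_0\}$. *)

theory Defs
  imports "HOL-Analysis.Analysis"
begin

(* Binary words: finite words are bool lists, infinite words are nat => bool
   (True = digit 1, False = digit 0). *)

definition bit :: "bool \<Rightarrow> real" where
  "bit b = (if b then 1 else 0)"

definition bin_val :: "bool list \<Rightarrow> real" where
  "bin_val w = (\<Sum>i<length w. bit (w ! i) / 2 ^ (i + 1))"

definition bin_val_inf :: "(nat \<Rightarrow> bool) \<Rightarrow> real" where
  "bin_val_inf w = (\<Sum>i. bit (w i) / 2 ^ (i + 1))"

definition tilde :: "real \<Rightarrow> (nat \<Rightarrow> bool)" where
  "tilde x = (THE w. \<not> (\<forall>\<^sub>F i in sequentially. \<not> w i) \<and> bin_val_inf w = x)"

definition block :: "nat \<Rightarrow> (nat \<Rightarrow> bool) \<Rightarrow> nat \<Rightarrow> bool list" where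
  "block k w j = map (\<lambda>i. w (k * j + i)) [0..<k]"

definition erasing_subst :: "nat \<Rightarrow> (bool list \<Rightarrow> bool list) \<Rightarrow> bool" where
  "erasing_subst k \<sigma> \<longleftrightarrow> (\<exists>!u. length u = k \<and> \<sigma> u = [])"

definition w_eps :: "nat \<Rightarrow> (bool list \<Rightarrow> bool list) \<Rightarrow> bool list" where
  "w_eps k \<sigma> = (THE u. length u = k \<and> \<sigma> u = [])"

definition per_word :: "bool list \<Rightarrow> bool list \<Rightarrow> nat \<Rightarrow> bool" where
  "per_word v u i = (if i < length v then v ! i else u ! ((i - length v) mod length u))"

(* 0.sigma(w): the value of the (finite or infinite) concatenation of the images of the
   consecutive k-blocks, i.e. the limit of the values of the finite prefixes
   sigma(b_0)...sigma(b_{n-1}) *)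
definition subst_val :: "nat \<Rightarrow> (bool list \<Rightarrow> bool list) \<Rightarrow> (nat \<Rightarrow> bool) \<Rightarrow> real" where
  "subst_val k \<sigma> w = lim (\<lambda>n. bin_val (concat (map (\<lambda>j. \<sigma> (block k w j)) [0..<n])))"

definition f_sigma :: "nat \<Rightarrow> (bool list \<Rightarrow> bool list) \<Rightarrow> real \<Rightarrow> real" where
  "f_sigma k \<sigma> x =
     (if x \<in> {0<..1} \<and> tilde x \<noteq> per_word [] (w_eps k \<sigma>)
      then subst_val k \<sigma> (tilde x) else 0)"

definition Q2 :: "real set" where
  "Q2 = {x \<in> {0..1}. \<exists>m n :: nat. x = real m / 2 ^ n}"

definition Q2_0 :: "real set" where
  "Q2_0 = (Q2 - {0, 1}) \<union> {0}"

definition E_sigma :: "nat \<Rightarrow> (bool list \<Rightarrow> bool list) \<Rightarrow> real set" where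
  "E_sigma k \<sigma> = {x \<in> {0..1} \<inter> \<rat>. \<exists>v n. length v = n * k \<and>
                     x = bin_val_inf (per_word v (w_eps k \<sigma>))}"

definition C_sigma :: "nat \<Rightarrow> (bool list \<Rightarrow> bool list) \<Rightarrow> real set" where
  "C_sigma k \<sigma> = {0..1} - (Q2_0 \<union> E_sigma k \<sigma>)"

definition baire_class_1 :: "(real \<Rightarrow> real) \<Rightarrow> bool" where
  "baire_class_1 f \<longleftrightarrow> (\<exists>g :: nat \<Rightarrow> real \<Rightarrow> real.
      (\<forall>n. continuous_on {0..1} (g n)) \<and>
      (\<forall>x \<in> {0..1}. (\<lambda>n. g n x) \<longlonglongrightarrow> f x))"

end

theory Submission
  imports Defs
begin

definition psum :: "(nat \<Rightarrow> bool) \<Rightarrow> nat \<Rightarrow> real" where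
  "psum w n = (\<Sum>i<n. bit (w i) / 2 ^ (i + 1))"

lemma bit_ge0[simp]: "0 \<le> bit b" and bit_le1[simp]: "bit b \<le> 1"
  by (auto simp: bit_def)

lemma freq_iff: "(\<not> (\<forall>\<^sub>F i in sequentially. \<not> w i)) \<longleftrightarrow> (\<forall>N. \<exists>i\<ge>N. w i)"
  by (auto simp: eventually_sequentially)

lemma summable_digits: "summable (\<lambda>i. bit (w i) / 2 ^ (i + 1))"
proof (rule summable_comparison_test[where g = "\<lambda>i. (1/2::real) ^ Suc i"])
  show "\<exists>N. \<forall>n\<ge>N. norm (bit (w n) / 2 ^ (n + 1)) \<le> (1 / 2) ^ Suc n"
    by (auto simp: bit_def power_one_over)
  show "summable (\<lambda>i. (1/2::real) ^ Suc i)"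
    using power_half_series sums_summable by blast
qed

lemma bin_val_inf_psum: "(\<lambda>n. psum w n) \<longlonglongrightarrow> bin_val_inf w"
  unfolding psum_def bin_val_inf_def using summable_LIMSEQ[OF summable_digits] by simp

lemma bin_val_inf_ge0: "0 \<le> bin_val_inf w"
  unfolding bin_val_inf_def by (rule suminf_nonneg[OF summable_digits]) simp

lemma bin_val_inf_le1: "bin_val_inf w \<le> 1"
proof -
  have "bin_val_inf w \<le> (\<Sum>i. (1/2::real) ^ Suc i)"
    unfolding bin_val_inf_def
  proof (rule suminf_le)
    show "summable (\<lambda>i. (1/2::real) ^ Suc i)" using power_half_series sums_summable by blast
    show "summable (\<lambda>i. bit (w i) / 2 ^ (i + 1))" by (rule summable_digits)
  qed (auto simp: bit_def power_one_over)
  also have "\<dots> = 1" using power_half_series sums_unique by metis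
  finally show ?thesis .
qed

lemma bin_val_inf_shift:
  "bin_val_inf w = psum w n + bin_val_inf (\<lambda>i. w (i + n)) / 2 ^ n"
proof -
  have "bin_val_inf w = (\<Sum>i. bit (w (i + n)) / 2 ^ (i + n + 1)) + psum w n"
    unfolding bin_val_inf_def psum_def by (rule suminf_split_initial_segment[OF summable_digits])
  also have "(\<lambda>i. bit (w (i + n)) / 2 ^ (i + n + 1)) = (\<lambda>i. (bit (w (i + n)) / 2 ^ (i + 1)) / 2 ^ n)"
    by (rule ext) (simp add: power_add)
  also have "suminf \<dots> = bin_val_inf (\<lambda>i. w (i + n)) / 2 ^ n"
    unfolding bin_val_inf_def by (rule suminf_divide[OF summable_digits])
  finally show ?thesis by simp
qed

lemma bin_val_inf_pos:
  assumes "w i" shows "0 < bin_val_inf w"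
  unfolding bin_val_inf_def
  by (rule suminf_pos2[OF summable_digits, of _ i]) (auto simp: assms bit_def)

lemma psum_bounds:
  assumes "\<forall>N. \<exists>i\<ge>N. w i"
  shows "psum w n < bin_val_inf w \<and> bin_val_inf w \<le> psum w n + 1 / 2 ^ n"
proof -
  obtain i where "i \<ge> n" "w i" using assms by blast
  then have "(\<lambda>j. w (j + n)) (i - n)" by simp
  then have "0 < bin_val_inf (\<lambda>j. w (j + n))" by (rule bin_val_inf_pos)
  moreover have "bin_val_inf (\<lambda>j. w (j + n)) \<le> 1" by (rule bin_val_inf_le1)
  ultimately show ?thesis using bin_val_inf_shift[of w n]
    by (simp add: divide_right_mono)
qed

lemma psum_Suc_scaled: "psum w (Suc n) * 2 ^ Suc n = 2 * (psum w n * 2 ^ n) + bit (w n)"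
  by (simp add: psum_def algebra_simps)

lemma psum_int: "\<exists>m::int. psum w n * 2 ^ n = of_int m"
proof (induction n)
  case 0 then show ?case by (simp add: psum_def)
next
  case (Suc n)
  then obtain m where m: "psum w n * 2 ^ n = of_int m" by blast
  show ?case
    by (rule exI[of _ "2 * m + (if w n then 1 else 0)"], subst psum_Suc_scaled) (simp add: m bit_def)
qed

lemma psum_ceil:
  assumes "\<forall>N. \<exists>i\<ge>N. w i"
  shows "psum w n * 2 ^ n = of_int \<lceil>bin_val_inf w * 2 ^ n\<rceil> - 1"
proof -
  obtain m where m: "psum w n * 2 ^ n = of_int m" using psum_int by blast
  have b: "psum w n < bin_val_inf w" "bin_val_inf w \<le> psum w n + 1 / 2 ^ n"
    using psum_bounds[OF assms] by auto
  have "of_int m < bin_val_inf w * 2 ^ n"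
  proof -
    have "psum w n * 2 ^ n < bin_val_inf w * 2 ^ n" using b(1) by simp
    then show ?thesis using m by simp
  qed
  moreover have "bin_val_inf w * 2 ^ n \<le> of_int m + 1"
  proof -
    have "bin_val_inf w * 2 ^ n \<le> (psum w n + 1 / 2 ^ n) * 2 ^ n"
      using b(2) by (simp add: mult_right_mono)
    then show ?thesis using m by (simp add: algebra_simps)
  qed
  ultimately have "\<lceil>bin_val_inf w * 2 ^ n\<rceil> = m + 1"
    by (simp add: ceiling_eq_iff)
  then show ?thesis using m by simp
qed

definition D :: "real \<Rightarrow> nat \<Rightarrow> bool" where
  "D x n = (\<lceil>x * 2 ^ Suc n\<rceil> - 1 - 2 * (\<lceil>x * 2 ^ n\<rceil> - 1) = 1)"

lemma bit_int: "bit b = of_int e \<Longrightarrow> b = (e = 1)"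
  by (cases b) (auto simp: bit_def)

lemma int_aux1: "(a::int) = 2*b - 1 \<or> a = 2*b \<Longrightarrow> bit (a - 1 - 2*(b-1) = 1) = of_int (a - 1 - 2*(b-1))"
  by (auto simp: bit_def)

lemma int_aux2: "(a::int) = 2*b - 1 \<or> a = 2*b \<Longrightarrow> b = (a - 1) div 2 + 1"
  by presburger

lemma digit_formula:
  assumes "\<forall>N. \<exists>i\<ge>N. w i"
  shows "w n = D (bin_val_inf w) n"
proof -
  have "bit (w n) = psum w (Suc n) * 2 ^ Suc n - 2 * (psum w n * 2 ^ n)"
    using psum_Suc_scaled[of w n] by linarith
  also have "\<dots> = of_int (\<lceil>bin_val_inf w * 2 ^ Suc n\<rceil> - 1 - 2 * (\<lceil>bin_val_inf w * 2 ^ n\<rceil> - 1))"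
    using psum_ceil[OF assms, of n] psum_ceil[OF assms, of "Suc n"] by simp
  finally show ?thesis unfolding D_def by (rule bit_int)
qed

lemma ceil_double:
  fixes t :: real
  shows "\<lceil>2 * t\<rceil> = 2 * \<lceil>t\<rceil> - 1 \<or> \<lceil>2 * t\<rceil> = 2 * \<lceil>t\<rceil>"
proof -
  have "of_int \<lceil>t\<rceil> - 1 < t" "t \<le> of_int \<lceil>t\<rceil>" by linarith+
  then have "2 * of_int \<lceil>t\<rceil> - 2 < 2 * t" "2 * t \<le> 2 * of_int \<lceil>t\<rceil>" by linarith+
  then show ?thesis by linarith
qed

lemma D_bit: "bit (D x n) = of_int (\<lceil>x * 2 ^ Suc n\<rceil> - 1 - 2 * (\<lceil>x * 2 ^ n\<rceil> - 1))"
proof -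
  have "x * 2 ^ Suc n = 2 * (x * 2 ^ n)" by simp
  then have "\<lceil>x * 2 ^ Suc n\<rceil> = 2 * \<lceil>x * 2 ^ n\<rceil> - 1 \<or> \<lceil>x * 2 ^ Suc n\<rceil> = 2 * \<lceil>x * 2 ^ n\<rceil>"
    using ceil_double by metis
  then show ?thesis unfolding D_def by (rule int_aux1)
qed

lemma psum_D:
  assumes "0 < x" "x \<le> 1"
  shows "psum (D x) n * 2 ^ n = of_int \<lceil>x * 2 ^ n\<rceil> - 1"
proof (induction n)
  case 0
  have "\<lceil>x\<rceil> = 1" using assms by (simp add: ceiling_eq_iff)
  then show ?case by (simp add: psum_def)
next
  case (Suc n)
  show ?case unfolding psum_Suc_scaled Suc D_bit by simp
qed

lemma psum_D_bounds:
  assumes "0 < x" "x \<le> 1"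
  shows "psum (D x) n < x" "x - 1 / 2 ^ n \<le> psum (D x) n"
proof -
  have e: "psum (D x) n = (of_int \<lceil>x * 2 ^ n\<rceil> - 1) / 2 ^ n"
    using psum_D[OF assms, of n] by (simp add: field_simps)
  have c: "of_int \<lceil>x * 2 ^ n\<rceil> - 1 < x * 2 ^ n" "x * 2 ^ n \<le> of_int \<lceil>x * 2 ^ n\<rceil>" by linarith+
  show "psum (D x) n < x" unfolding e using c(1) by (simp add: divide_less_eq)
  show "x - 1 / 2 ^ n \<le> psum (D x) n" unfolding e using c(2) by (simp add: field_simps)
qed

lemma D_props:
  assumes "0 < x" "x \<le> 1"
  shows "\<forall>N. \<exists>i\<ge>N. D x i" "bin_val_inf (D x) = x"
proof -
  have lim: "(\<lambda>n. psum (D x) n) \<longlonglongrightarrow> x"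
  proof (rule tendsto_sandwich[where f = "\<lambda>n. x - (1/2) ^ n" and h = "\<lambda>n. x"])
    show "\<forall>\<^sub>F n in sequentially. x - (1 / 2) ^ n \<le> psum (D x) n"
      using psum_D_bounds(2)[OF assms] by (simp add: power_one_over)
    show "\<forall>\<^sub>F n in sequentially. psum (D x) n \<le> x"
      using psum_D_bounds(1)[OF assms] by (simp add: less_imp_le)
    show "(\<lambda>n. x - (1 / 2) ^ n) \<longlonglongrightarrow> x"
      using tendsto_diff[OF tendsto_const LIMSEQ_power_zero[of "1/2::real"]] by simp
  qed simp
  then show "bin_val_inf (D x) = x" using bin_val_inf_psum LIMSEQ_unique by blast
  show "\<forall>N. \<exists>i\<ge>N. D x i"
  proof (rule ccontr)
    assume "\<not> (\<forall>N. \<exists>i\<ge>N. D x i)"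
    then obtain N where N: "\<forall>i\<ge>N. \<not> D x i" by auto
    have "\<forall>n\<ge>N. psum (D x) n = psum (D x) N"
    proof (intro allI impI)
      fix n assume "N \<le> n"
      then show "psum (D x) n = psum (D x) N"
      proof (induction n rule: dec_induct)
        case (step n) then show ?case using N by (simp add: psum_def bit_def)
      qed simp
    qed
    then have "\<exists>M. \<forall>n\<ge>M. psum (D x) n \<le> psum (D x) N" by (metis order_refl)
    then have "x \<le> psum (D x) N" by (rule LIMSEQ_le_const2[OF lim])
    then show False using psum_D_bounds(1)[OF assms, of N] by simp
  qed
qed

lemma tilde_eq:
  assumes "0 < x" "x \<le> 1"
  shows "tilde x = D x"
  unfolding tilde_def
proof (rule the_equality)
  show "\<not> (\<forall>\<^sub>F i in sequentially. \<not> D x i) \<and> bin_val_inf (D x) = x"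
    using D_props[OF assms] by (simp add: freq_iff)
next
  fix w assume "\<not> (\<forall>\<^sub>F i in sequentially. \<not> w i) \<and> bin_val_inf w = x"
  then have f: "\<forall>N. \<exists>i\<ge>N. w i" and b: "bin_val_inf w = x" by (simp_all add: freq_iff)
  show "w = D x"
  proof
    fix i show "w i = D x i" using digit_formula[OF f, of i] unfolding b .
  qed
qed

lemma tilde_props:
  assumes "0 < x" "x \<le> 1"
  shows "\<forall>N. \<exists>i\<ge>N. tilde x i" "bin_val_inf (tilde x) = x"
  using D_props[OF assms] tilde_eq[OF assms] by simp_all

lemma ceil_half: fixes t :: real shows "\<lceil>t\<rceil> = (\<lceil>2 * t\<rceil> - 1) div 2 + 1"
  using ceil_double[of t] by (rule int_aux2)

lemma ceil_down:
  fixes x y :: real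
  assumes eq: "\<lceil>x * 2 ^ n\<rceil> = \<lceil>y * 2 ^ n\<rceil>" and mn: "m \<le> n"
  shows "\<lceil>x * 2 ^ m\<rceil> = \<lceil>y * 2 ^ m\<rceil>"
  using mn
proof (induction m rule: inc_induct)
  case base show ?case by (rule eq)
next
  case (step m)
  have hx: "\<lceil>x * 2 ^ m\<rceil> = (\<lceil>x * 2 ^ Suc m\<rceil> - 1) div 2 + 1"
    using ceil_half[of "x * 2 ^ m"] by (simp add: mult_ac)
  have hy: "\<lceil>y * 2 ^ m\<rceil> = (\<lceil>y * 2 ^ Suc m\<rceil> - 1) div 2 + 1"
    using ceil_half[of "y * 2 ^ m"] by (simp add: mult_ac)
  show ?case unfolding hx hy step(3) ..
qed

lemma tilde_agree:
  assumes "0 < x" "x \<le> 1" "0 < y" "y \<le> 1" "\<lceil>x * 2 ^ n\<rceil> = \<lceil>y * 2 ^ n\<rceil>" "i < n"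
  shows "tilde x i = tilde y i"
  unfolding tilde_eq[OF assms(1,2)] tilde_eq[OF assms(3,4)] D_def
  using ceil_down[OF assms(5), of i] ceil_down[OF assms(5), of "Suc i"] assms(6) by simp


lemma w_eps_props:
  assumes "erasing_subst k \<sigma>"
  shows "length (w_eps k \<sigma>) = k" "\<sigma> (w_eps k \<sigma>) = []"
    "\<And>u. length u = k \<Longrightarrow> \<sigma> u = [] \<Longrightarrow> u = w_eps k \<sigma>"
proof -
  have e: "\<exists>!u. length u = k \<and> \<sigma> u = []" using assms unfolding erasing_subst_def .
  have t: "length (w_eps k \<sigma>) = k \<and> \<sigma> (w_eps k \<sigma>) = []"
    unfolding w_eps_def by (rule theI'[OF e])
  then show "length (w_eps k \<sigma>) = k" "\<sigma> (w_eps k \<sigma>) = []" by auto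
  fix u assume "length u = k" "\<sigma> u = []"
  then show "u = w_eps k \<sigma>" using e t by blast
qed

lemma length_block[simp]: "length (block k w j) = k"
  by (simp add: block_def)

lemma block_per_word:
  assumes "length u = k" "0 < k"
  shows "block k (per_word [] u) j = u"
proof (rule nth_equalityI)
  show "length (block k (per_word [] u) j) = length u" using assms by simp
  fix i assume "i < length (block k (per_word [] u) j)"
  then have "i < k" by simp
  then show "block k (per_word [] u) j ! i = u ! i"
    using assms by (simp add: block_def per_word_def)
qed

lemma bin_val_snoc: "bin_val (xs @ [b]) = bin_val xs + bit b / 2 ^ (length xs + 1)"
  unfolding bin_val_def by (simp add: nth_append)

lemma bin_val_append: "bin_val (U @ r) = bin_val U + bin_val r / 2 ^ length U"
proof (induction r rule: rev_induct)
  case Nil then show ?case by (simp add: bin_val_def)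
next
  case (snoc b r)
  have "bin_val (U @ r @ [b]) = bin_val (U @ r) + bit b / 2 ^ (length U + length r + 1)"
    using bin_val_snoc[of "U @ r" b] by simp
  also have "\<dots> = bin_val U + (bin_val r + bit b / 2 ^ (length r + 1)) / 2 ^ length U"
    unfolding snoc by (simp add: power_add field_simps)
  finally show ?case by (simp add: bin_val_snoc)
qed

lemma bin_val_nonneg: "0 \<le> bin_val r"
  unfolding bin_val_def by (intro sum_nonneg) simp

lemma bin_val_le: "bin_val r \<le> 1 - 1 / 2 ^ length r"
proof (induction r rule: rev_induct)
  case Nil then show ?case by (simp add: bin_val_def)
next
  case (snoc b r)
  have "bit b / 2 ^ (length r + 1) \<le> 1 / 2 ^ (length r + 1)"
    by (simp add: divide_right_mono)
  moreover have "1 / (2::real) ^ length r = 2 * (1 / 2 ^ (length r + 1))" by simp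
  ultimately show ?case using snoc by (simp add: bin_val_snoc)
qed

lemma bin_val_le1: "bin_val r \<le> 1"
proof -
  have "0 \<le> 1 / (2::real) ^ length r" by simp
  then show ?thesis using bin_val_le[of r] by linarith
qed

lemma bin_val_append_bounds:
  "bin_val U \<le> bin_val (U @ r)" "bin_val (U @ r) \<le> bin_val U + 1 / 2 ^ length U"
  unfolding bin_val_append using bin_val_nonneg[of r] bin_val_le1[of r]
  by (simp_all add: divide_right_mono)

definition SS :: "nat \<Rightarrow> (bool list \<Rightarrow> bool list) \<Rightarrow> (nat \<Rightarrow> bool) \<Rightarrow> nat \<Rightarrow> bool list" where
  "SS k \<sigma> w n = concat (map (\<lambda>j. \<sigma> (block k w j)) [0..<n])"

lemma SS_add: "\<exists>r. SS k \<sigma> w (n + m) = SS k \<sigma> w n @ r"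
  unfolding SS_def upt_add_eq_append[OF le0] by simp

lemma SS_mono: "n \<le> m \<Longrightarrow> \<exists>r. SS k \<sigma> w m = SS k \<sigma> w n @ r"
  using SS_add[of k \<sigma> w n "m - n"] by simp

lemma subst_val_bounds:
  "bin_val (SS k \<sigma> w N) \<le> subst_val k \<sigma> w"
  "subst_val k \<sigma> w \<le> bin_val (SS k \<sigma> w N) + 1 / 2 ^ length (SS k \<sigma> w N)"
proof -
  let ?a = "\<lambda>n. bin_val (SS k \<sigma> w n)"
  have inc: "incseq ?a"
  proof (rule incseq_SucI)
    fix n show "?a n \<le> ?a (Suc n)"
      using SS_mono[of n "Suc n" k \<sigma> w] bin_val_append_bounds(1) by fastforce
  qed
  obtain L where L: "?a \<longlonglongrightarrow> L" using incseq_convergent[OF inc, of 1] bin_val_le1 by blast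
  have sv: "subst_val k \<sigma> w = L"
    unfolding subst_val_def SS_def[symmetric] using L limI by blast
  have "\<forall>n\<ge>N. bin_val (SS k \<sigma> w N) \<le> ?a n"
    using SS_mono bin_val_append_bounds(1) by metis
  then show "bin_val (SS k \<sigma> w N) \<le> subst_val k \<sigma> w"
    unfolding sv by (intro LIMSEQ_le_const[OF L]) blast
  have "\<forall>n\<ge>N. ?a n \<le> bin_val (SS k \<sigma> w N) + 1 / 2 ^ length (SS k \<sigma> w N)"
    using SS_mono bin_val_append_bounds(2) by metis
  then show "subst_val k \<sigma> w \<le> bin_val (SS k \<sigma> w N) + 1 / 2 ^ length (SS k \<sigma> w N)"
    unfolding sv by (intro LIMSEQ_le_const2[OF L]) blast
qed

lemma subst_val_close:
  assumes "SS k \<sigma> w N = SS k \<sigma> w' N"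
  shows "\<bar>subst_val k \<sigma> w - subst_val k \<sigma> w'\<bar> \<le> 1 / 2 ^ length (SS k \<sigma> w N)"
  using subst_val_bounds[of k \<sigma> w N] subst_val_bounds[of k \<sigma> w' N] unfolding assms[symmetric] by linarith

lemma SS_agree:
  assumes "\<forall>i<N * k. w i = w' i"
  shows "SS k \<sigma> w N = SS k \<sigma> w' N"
proof -
  have "block k w j = block k w' j" if "j < N" for j
  proof -
    have "k * j + i < N * k" if "i < k" for i
    proof -
      have "k * j + i < k * j + k" using that by simp
      also have "\<dots> = k * (j + 1)" by simp
      also have "\<dots> \<le> k * N" using \<open>j < N\<close> by (intro mult_le_mono2) simp
      finally show ?thesis by (simp add: mult.commute)
    qed
    then show ?thesis using assms by (auto simp: block_def)
  qed
  then show ?thesis unfolding SS_def by (intro arg_cong[where f = concat] map_cong) auto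
qed

lemma SS_length:
  assumes "erasing_subst k \<sigma>"
  shows "card {j. j < N \<and> block k w j \<noteq> w_eps k \<sigma>} \<le> length (SS k \<sigma> w N)"
proof (induction N)
  case 0 then show ?case by (simp add: SS_def)
next
  case (Suc N)
  have eq: "SS k \<sigma> w (Suc N) = SS k \<sigma> w N @ \<sigma> (block k w N)" by (simp add: SS_def)
  show ?case
  proof (cases "block k w N = w_eps k \<sigma>")
    case True
    then have "{j. j < Suc N \<and> block k w j \<noteq> w_eps k \<sigma>} = {j. j < N \<and> block k w j \<noteq> w_eps k \<sigma>}"
      using less_Suc_eq by auto
    then show ?thesis using Suc eq by simp
  next
    case False
    then have s: "{j. j < Suc N \<and> block k w j \<noteq> w_eps k \<sigma>} = insert N {j. j < N \<and> block k w j \<noteq> w_eps k \<sigma>}"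
      using less_Suc_eq by auto
    have "\<sigma> (block k w N) \<noteq> []" using w_eps_props(3)[OF assms, of "block k w N"] False by auto
    then have "1 \<le> length (\<sigma> (block k w N))" by (cases "\<sigma> (block k w N)") auto
    then show ?thesis unfolding s eq using Suc by simp
  qed
qed


lemma core:
  assumes er: "erasing_subst k \<sigma>" and k: "0 < k" and x: "0 < x" "x \<le> 1"
    and inf: "infinite {j. block k (tilde x) j \<noteq> w_eps k \<sigma>}" and e: "0 < e"
  shows "\<exists>n. \<forall>y::real. 0 < y \<and> y \<le> 1 \<and> \<lceil>y * 2 ^ n\<rceil> = \<lceil>x * 2 ^ n\<rceil> \<longrightarrow>
            \<bar>f_sigma k \<sigma> y - f_sigma k \<sigma> x\<bar> < e"
proof -
  obtain M where M: "(1/2::real) ^ M < e" using real_arch_pow_inv[OF e, of "1/2"] by auto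
  obtain B where B: "finite B" "card B = Suc M" "B \<subseteq> {j. block k (tilde x) j \<noteq> w_eps k \<sigma>}"
    using infinite_arbitrarily_large[OF inf] by blast
  have Bne: "B \<noteq> {}" using B(2) by auto
  define N where "N = Suc (Max B)"
  have BN: "B \<subseteq> {j. j < N \<and> block k (tilde x) j \<noteq> w_eps k \<sigma>}"
    using B Max_ge[OF B(1)] unfolding N_def by (auto simp: less_Suc_eq_le)
  obtain j0 where j0: "j0 \<in> B" using Bne by blast
  have pw: "block k (per_word [] (w_eps k \<sigma>)) j = w_eps k \<sigma>" for j
    by (rule block_per_word[OF w_eps_props(1)[OF er] k])
  show ?thesis
  proof (intro exI allI impI)
    fix y :: real assume y: "0 < y \<and> y \<le> 1 \<and> \<lceil>y * 2 ^ (N * k)\<rceil> = \<lceil>x * 2 ^ (N * k)\<rceil>"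
    have agree: "\<forall>i<N * k. tilde y i = tilde x i"
      using tilde_agree[of y x "N * k"] y x by auto
    have SSeq: "SS k \<sigma> (tilde y) N = SS k \<sigma> (tilde x) N" by (rule SS_agree[OF agree])
    have blk: "block k (tilde y) j0 = block k (tilde x) j0"
    proof -
      have "SS k \<sigma> (tilde y) N = SS k \<sigma> (tilde x) N" by (rule SSeq)
      have "j0 < N" using BN j0 by auto
      have "k * j0 + i < N * k" if "i < k" for i
      proof -
        have "k * j0 + i < k * j0 + k" using that by simp
        also have "\<dots> = k * (j0 + 1)" by simp
        also have "\<dots> \<le> k * N" using \<open>j0 < N\<close> by (intro mult_le_mono2) simp
        finally show ?thesis by (simp add: mult.commute)
      qed
      then show ?thesis using agree by (auto simp: block_def)
    qed
    have bx: "block k (tilde x) j0 \<noteq> w_eps k \<sigma>" using B(3) j0 by auto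
    have fx: "f_sigma k \<sigma> x = subst_val k \<sigma> (tilde x)"
      unfolding f_sigma_def using x bx pw by auto
    have fy: "f_sigma k \<sigma> y = subst_val k \<sigma> (tilde y)"
      unfolding f_sigma_def using y bx blk pw by auto
    have "Suc M \<le> card {j. j < N \<and> block k (tilde x) j \<noteq> w_eps k \<sigma>}"
      using card_mono[OF _ BN] B(2) by simp
    also have "\<dots> \<le> length (SS k \<sigma> (tilde x) N)" by (rule SS_length[OF er])
    finally have len: "Suc M \<le> length (SS k \<sigma> (tilde x) N)" .
    have "\<bar>f_sigma k \<sigma> y - f_sigma k \<sigma> x\<bar> \<le> 1 / 2 ^ length (SS k \<sigma> (tilde y) N)"
      unfolding fx fy by (rule subst_val_close[OF SSeq])
    also have "\<dots> \<le> 1 / 2 ^ Suc M"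
    proof -
      have "(2::real) ^ Suc M \<le> 2 ^ length (SS k \<sigma> (tilde x) N)" by (rule power_increasing[OF len]) simp
      then show ?thesis unfolding SSeq by (rule divide_left_mono) simp_all
    qed
    also have "\<dots> \<le> (1/2) ^ M"
    proof -
      have "(1::real) / 2 ^ Suc M \<le> 1 / 2 ^ M" by (rule divide_left_mono) simp_all
      then show ?thesis by (simp add: power_one_over)
    qed
    finally show "\<bar>f_sigma k \<sigma> y - f_sigma k \<sigma> x\<bar> < e" using M by linarith
  qed
qed

lemma rat_psum: "psum w n \<in> \<rat>"
  unfolding psum_def bit_def by (intro Rats_sum) auto

lemma per_word_rat:
  assumes "0 < length u"
  shows "bin_val_inf (per_word v u) \<in> \<rat>"
proof -
  define w where "w = per_word v u"
  define a where "a = length v"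
  define b where "b = length u"
  have sh: "(\<lambda>i. w (i + (a + b))) = (\<lambda>i. w (i + a))"
  proof
    fix i
    have "(i + (a + b) - a) mod b = (i + a - a) mod b" by simp
    then show "w (i + (a + b)) = w (i + a)" unfolding w_def per_word_def a_def b_def by simp
  qed
  define T where "T = bin_val_inf (\<lambda>i. w (i + a))"
  define x where "x = bin_val_inf w"
  have e1: "x = psum w a + T / 2 ^ a" unfolding x_def T_def by (rule bin_val_inf_shift)
  have e2: "x = psum w (a + b) + T / 2 ^ (a + b)"
    unfolding x_def T_def using bin_val_inf_shift[of w "a + b"] sh by simp
  have t1: "T / 2 ^ a = x - psum w a" using e1 by simp
  have "T / 2 ^ (a + b) = (T / 2 ^ a) / 2 ^ b" by (simp add: power_add)
  then have "x = psum w (a + b) + (x - psum w a) / 2 ^ b"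
    using e2 t1 by simp
  then have "x * (1 - 1 / 2 ^ b) = psum w (a + b) - psum w a / 2 ^ b"
    by (simp add: field_simps)
  moreover have "1 - 1 / (2::real) ^ b \<noteq> 0"
  proof -
    have "1 < (2::real) ^ b" using assms unfolding b_def by (simp add: one_less_power)
    then show ?thesis by simp
  qed
  ultimately have "x = (psum w (a + b) - psum w a / 2 ^ b) / (1 - 1 / 2 ^ b)"
    by (metis nonzero_mult_div_cancel_right)
  also have "\<dots> \<in> \<rat>" using rat_psum by (intro Rats_divide Rats_diff Rats_1) auto
  finally show ?thesis unfolding x_def w_def .
qed

lemma tilde_per_word:
  assumes k: "0 < k" and N: "\<forall>j\<ge>N. block k w j = u" and lu: "length u = k"
  shows "w = per_word (map w [0..<N * k]) u"
proof
  fix i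
  show "w i = per_word (map w [0..<N * k]) u i"
  proof (cases "i < N * k")
    case True then show ?thesis by (simp add: per_word_def)
  next
    case False
    have "N * k div k \<le> i div k" using False by (intro div_le_mono) simp
    then have "N \<le> i div k" using k by simp
    then have "block k w (i div k) = u" using N by simp
    then have "u ! (i mod k) = w (k * (i div k) + i mod k)"
      using k by (auto simp: block_def)
    also have "k * (i div k) + i mod k = i" by simp
    finally have "w i = u ! (i mod k)" by simp
    moreover have "(i - N * k) mod k = i mod k"
      using False by (metis le_add_diff_inverse2 mod_mult_self1 not_less)
    ultimately show ?thesis using False lu by (simp add: per_word_def)
  qed
qed

lemma C_infinite:
  assumes er: "erasing_subst k \<sigma>" and k: "0 < k" and x: "0 < x" "x \<le> 1"
    and nE: "x \<notin> E_sigma k \<sigma>"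
  shows "infinite {j. block k (tilde x) j \<noteq> w_eps k \<sigma>}"
proof
  assume fin: "finite {j. block k (tilde x) j \<noteq> w_eps k \<sigma>}"
  then obtain N where "\<forall>j\<in>{j. block k (tilde x) j \<noteq> w_eps k \<sigma>}. j < N"
    using finite_nat_set_iff_bounded by blast
  then have N: "\<forall>j\<ge>N. block k (tilde x) j = w_eps k \<sigma>" by force
  define v where "v = map (tilde x) [0..<N * k]"
  have tw: "tilde x = per_word v (w_eps k \<sigma>)"
    unfolding v_def by (rule tilde_per_word[OF k N w_eps_props(1)[OF er]])
  have xv: "x = bin_val_inf (per_word v (w_eps k \<sigma>))"
    using tilde_props(2)[OF x] tw by simp
  have "x \<in> \<rat>" unfolding xv using w_eps_props(1)[OF er] k by (intro per_word_rat) simp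
  moreover have "length v = N * k" by (simp add: v_def)
  ultimately have "x \<in> E_sigma k \<sigma>" unfolding E_sigma_def using x xv by auto
  then show False using nE by simp
qed

lemma dyadic_D:
  assumes "x * 2 ^ i = of_int z"
  shows "D x i"
proof -
  have "x * 2 ^ Suc i = of_int (2 * z)" using assms by (simp add: mult_ac)
  then have c1: "\<lceil>x * 2 ^ Suc i\<rceil> = 2 * z" by (metis ceiling_of_int)
  have c0: "\<lceil>x * 2 ^ i\<rceil> = z" using assms by (metis ceiling_of_int)
  show ?thesis unfolding D_def c1 c0 by simp
qed

lemma Q2_infinite:
  assumes er: "erasing_subst k \<sigma>" and k: "0 < k" and q: "q \<in> Q2" "q \<noteq> 0"
    and ne: "w_eps k \<sigma> \<noteq> replicate k True"
  shows "infinite {j. block k (tilde q) j \<noteq> w_eps k \<sigma>}"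
proof -
  obtain m n :: nat where qm: "q = real m / 2 ^ n" and q01: "0 \<le> q" "q \<le> 1"
    using q unfolding Q2_def by auto
  have qpos: "0 < q" using q01 q(2) by simp
  have T: "tilde q i" if "n \<le> i" for i
  proof -
    have "q * 2 ^ i = real m * 2 ^ (i - n)"
      unfolding qm using that by (simp add: power_diff)
    also have "\<dots> = of_int (int (m * 2 ^ (i - n)))" by simp
    finally show ?thesis using tilde_eq[OF qpos q01(2)] dyadic_D by metis
  qed
  have "{n..} \<subseteq> {j. block k (tilde q) j \<noteq> w_eps k \<sigma>}"
  proof
    fix j assume "j \<in> {n..}"
    then have jn: "n \<le> j" by simp
    have "n \<le> k * j + i" for i
    proof -
      have "j \<le> k * j" using k by simp
      then show ?thesis using jn by linarith
    qed
    then have "block k (tilde q) j = replicate k True"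
      by (intro nth_equalityI) (auto simp: block_def T)
    then show "j \<in> {j. block k (tilde q) j \<noteq> w_eps k \<sigma>}" using ne by simp
  qed
  then show ?thesis using infinite_Ici infinite_super by blast
qed

lemma left_nbhd:
  assumes x: "0 < x" "x \<le> 1"
  shows "\<exists>d>0. \<forall>y::real. y \<le> x \<and> x - y < d \<longrightarrow> 0 < y \<and> \<lceil>y * 2 ^ n\<rceil> = \<lceil>x * 2 ^ n\<rceil>"
proof -
  define c where "c = \<lceil>x * 2 ^ n\<rceil>"
  have c1: "of_int c - 1 < x * 2 ^ n" "x * 2 ^ n \<le> of_int c" unfolding c_def by linarith+
  have cpos: "1 \<le> c" using x unfolding c_def by (simp add: zero_less_mult_iff)
  define d where "d = (x * 2 ^ n - (of_int c - 1)) / 2 ^ n"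
  have "0 < d" using c1 unfolding d_def by simp
  moreover have "0 < y \<and> \<lceil>y * 2 ^ n\<rceil> = c" if "y \<le> x" "x - y < d" for y :: real
  proof -
    have "x * 2 ^ n - y * 2 ^ n < d * 2 ^ n" using that(2)
      by (metis left_diff_distrib mult_strict_right_mono zero_less_numeral zero_less_power)
    also have "d * 2 ^ n = x * 2 ^ n - (of_int c - 1)" unfolding d_def by simp
    finally have a: "of_int c - 1 < y * 2 ^ n" by simp
    have b: "y * 2 ^ n \<le> of_int c" using that(1) c1(2)
      by (meson dual_order.trans mult_right_mono zero_le_numeral zero_le_power)
    have "0 < y * 2 ^ n" using a cpos by linarith
    then have "0 < y" by (simp add: zero_less_mult_iff)
    moreover have "\<lceil>y * 2 ^ n\<rceil> = c" using a b by (simp add: ceiling_eq_iff)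
    ultimately show ?thesis by simp
  qed
  ultimately show ?thesis unfolding c_def by blast
qed

lemma two_nbhd:
  assumes x: "0 < x" "x < 1" "x \<notin> Q2"
  shows "\<exists>d>0. \<forall>y::real. \<bar>y - x\<bar> < d \<longrightarrow> 0 < y \<and> \<lceil>y * 2 ^ n\<rceil> = \<lceil>x * 2 ^ n\<rceil>"
proof -
  define c where "c = \<lceil>x * 2 ^ n\<rceil>"
  have c1: "of_int c - 1 < x * 2 ^ n" "x * 2 ^ n \<le> of_int c" unfolding c_def by linarith+
  have cpos: "1 \<le> c" using x unfolding c_def by (simp add: zero_less_mult_iff)
  have "x * 2 ^ n \<noteq> of_int c"
  proof
    assume h: "x * 2 ^ n = of_int c"
    have xe: "x = real (nat c) / 2 ^ n" using h cpos by (simp add: field_simps)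
    have "x \<in> {0..1}" using x by simp
    then have "x \<in> Q2" unfolding Q2_def using xe by blast
    then show False using x by simp
  qed
  then have c2: "x * 2 ^ n < of_int c" using c1 by simp
  define d where "d = min (x * 2 ^ n - (of_int c - 1)) (of_int c - x * 2 ^ n) / 2 ^ n"
  have "0 < d" using c1 c2 unfolding d_def by simp
  moreover have "0 < y \<and> \<lceil>y * 2 ^ n\<rceil> = c" if "\<bar>y - x\<bar> < d" for y :: real
  proof -
    have "\<bar>y * 2 ^ n - x * 2 ^ n\<bar> < d * 2 ^ n" using that
      by (metis abs_mult_pos left_diff_distrib mult_strict_right_mono zero_le_numeral zero_le_power zero_less_numeral zero_less_power)
    also have "d * 2 ^ n = min (x * 2 ^ n - (of_int c - 1)) (of_int c - x * 2 ^ n)" unfolding d_def by simp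
    finally have a: "of_int c - 1 < y * 2 ^ n" "y * 2 ^ n < of_int c" by linarith+
    have "0 < y * 2 ^ n" using a cpos by linarith
    then have "0 < y" by (simp add: zero_less_mult_iff)
    moreover have "\<lceil>y * 2 ^ n\<rceil> = c" using a by (simp add: ceiling_eq_iff)
    ultimately show ?thesis by simp
  qed
  ultimately show ?thesis unfolding c_def by blast
qed


definition prv :: "real set \<Rightarrow> real \<Rightarrow> real" where
  "prv S s = Max (insert (-1) {y\<in>S. y < s})"
definition nxt :: "real set \<Rightarrow> real \<Rightarrow> real" where
  "nxt S s = Min (insert 2 {y\<in>S. s < y})"
definition hat :: "real set \<Rightarrow> real \<Rightarrow> real \<Rightarrow> real" where
  "hat S s x = max 0 (min ((x - prv S s) / (s - prv S s)) ((nxt S s - x) / (nxt S s - s)))"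
definition interp :: "real set \<Rightarrow> (real \<Rightarrow> real) \<Rightarrow> real \<Rightarrow> real" where
  "interp S f x = (\<Sum>s\<in>S. f s * hat S s x)"

context
  fixes S :: "real set"
  assumes fin: "finite S" and sub: "S \<subseteq> {0..1}"
begin

lemma prv_lt: "s \<in> S \<Longrightarrow> prv S s < s"
proof -
  assume s: "s \<in> S"
  have "prv S s \<in> insert (-1) {y\<in>S. y < s}" unfolding prv_def by (rule Max_in) (use fin in auto)
  then show ?thesis using s sub by auto
qed

lemma nxt_gt: "s \<in> S \<Longrightarrow> s < nxt S s"
proof -
  assume s: "s \<in> S"
  have "nxt S s \<in> insert 2 {y\<in>S. s < y}" unfolding nxt_def by (rule Min_in) (use fin in auto)
  then show ?thesis using s sub by auto
qed

lemma prv_ge: "y \<in> S \<Longrightarrow> y < s \<Longrightarrow> y \<le> prv S s"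
  unfolding prv_def by (rule Max_ge) (use fin in auto)

lemma nxt_le: "y \<in> S \<Longrightarrow> s < y \<Longrightarrow> nxt S s \<le> y"
  unfolding nxt_def by (rule Min_le) (use fin in auto)

lemma hat_zero: "s \<in> S \<Longrightarrow> nxt S s \<le> x \<or> x \<le> prv S s \<Longrightarrow> hat S s x = 0"
proof -
  assume s: "s \<in> S" and h: "nxt S s \<le> x \<or> x \<le> prv S s"
  have p: "0 < s - prv S s" "0 < nxt S s - s" using prv_lt[OF s] nxt_gt[OF s] by auto
  from h show ?thesis
  proof
    assume "nxt S s \<le> x"
    then have "(nxt S s - x) / (nxt S s - s) \<le> 0" using p by (simp add: divide_nonpos_pos)
    then show ?thesis unfolding hat_def by simp
  next
    assume "x \<le> prv S s"
    then have "(x - prv S s) / (s - prv S s) \<le> 0" using p by (simp add: divide_nonpos_pos)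
    then show ?thesis unfolding hat_def by simp
  qed
qed

lemma hat_cont: "s \<in> S \<Longrightarrow> continuous_on UNIV (hat S s)"
proof -
  assume s: "s \<in> S"
  have p: "s - prv S s \<noteq> 0" "nxt S s - s \<noteq> 0" using prv_lt[OF s] nxt_gt[OF s] by auto
  show ?thesis unfolding hat_def using p by (intro continuous_intros) auto
qed

lemma interp_cont: "continuous_on UNIV (interp S f)"
  unfolding interp_def by (intro continuous_on_sum continuous_on_mult continuous_on_const hat_cont)

lemma interp_node:
  assumes x: "x \<in> S"
  shows "interp S f x = f x"
proof -
  have "hat S x x = 1"
    using prv_lt[OF x] nxt_gt[OF x] unfolding hat_def by simp
  moreover have "hat S s x = 0" if "s \<in> S - {x}" for s
  proof -
    have s: "s \<in> S" "s \<noteq> x" using that by auto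
    show ?thesis
    proof (cases "s < x")
      case True then show ?thesis using hat_zero[OF s(1)] nxt_le[OF x True] by simp
    next
      case False then have "x < s" using s by simp
      then show ?thesis using hat_zero[OF s(1)] prv_ge[OF x] by simp
    qed
  qed
  ultimately show ?thesis unfolding interp_def
    using sum.remove[OF fin x, of "\<lambda>s. f s * hat S s x"] by simp
qed

lemma interp_between:
  assumes a: "a \<in> S" and b: "b \<in> S" and ax: "a < x" and xb: "x < b"
    and gap: "\<forall>s\<in>S. s \<le> a \<or> b \<le> s"
  shows "interp S f x = f a * ((b - x) / (b - a)) + f b * ((x - a) / (b - a))"
proof -
  have na: "nxt S a = b"
  proof (rule antisym)
    show "nxt S a \<le> b" using nxt_le[OF b] ax xb by simp
    have "nxt S a \<in> insert 2 {y\<in>S. a < y}" unfolding nxt_def by (rule Min_in) (use fin in auto)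
    then show "b \<le> nxt S a" using gap b sub by auto
  qed
  have pb: "prv S b = a"
  proof (rule antisym)
    show "a \<le> prv S b" using prv_ge[OF a] ax xb by simp
    have "prv S b \<in> insert (-1) {y\<in>S. y < b}" unfolding prv_def by (rule Max_in) (use fin in auto)
    then show "prv S b \<le> a" using gap a sub by auto
  qed
  have ha: "hat S a x = (b - x) / (b - a)"
  proof -
    have p: "prv S a < a" by (rule prv_lt[OF a])
    have "1 \<le> (x - prv S a) / (a - prv S a)" using p ax by simp
    moreover have "(b - x) / (b - a) \<le> 1" using ax xb by simp
    moreover have "0 \<le> (b - x) / (b - a)" using ax xb by simp
    ultimately show ?thesis unfolding hat_def na by simp
  qed
  have hb: "hat S b x = (x - a) / (b - a)"
  proof -
    have p: "b < nxt S b" by (rule nxt_gt[OF b])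
    have "1 \<le> (nxt S b - x) / (nxt S b - b)" using p xb by simp
    moreover have "(x - a) / (b - a) \<le> 1" using ax xb by simp
    moreover have "0 \<le> (x - a) / (b - a)" using ax xb by simp
    ultimately show ?thesis unfolding hat_def pb by simp
  qed
  have z: "hat S s x = 0" if "s \<in> S - {a, b}" for s
  proof -
    have s: "s \<in> S" "s \<noteq> a" "s \<noteq> b" using that by auto
    show ?thesis
    proof (cases "s < x")
      case True
      have "s \<le> a \<or> b \<le> s" using gap s(1) by blast
      then have "s < a" using s(2) True xb by linarith
      then have "nxt S s \<le> a" by (rule nxt_le[OF a])
      then show ?thesis using hat_zero[OF s(1)] ax by simp
    next
      case False
      have "s \<le> a \<or> b \<le> s" using gap s(1) by blast
      then have "b < s" using s(3) False ax by linarith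
      then have "b \<le> prv S s" by (rule prv_ge[OF b])
      then show ?thesis using hat_zero[OF s(1)] xb by simp
    qed
  qed
  have ab: "a \<noteq> b" using ax xb by simp
  have "interp S f x = (\<Sum>s\<in>{a, b}. f s * hat S s x) + (\<Sum>s\<in>S - {a, b}. f s * hat S s x)"
    unfolding interp_def using fin a b by (metis (no_types, lifting) empty_subsetI insert_subset sum.subset_diff add.commute)
  also have "(\<Sum>s\<in>S - {a, b}. f s * hat S s x) = 0" using z by simp
  finally show ?thesis using ab ha hb by simp
qed

end


lemma consecutive:
  fixes S :: "real set" and x :: real
  assumes fin: "finite S" and sub: "S \<subseteq> {0..1}" and s0: "0 \<in> S" and s1: "1 \<in> S"
    and x: "x \<in> {0..1}" "x \<notin> S"
  shows "\<exists>a b. a \<in> S \<and> b \<in> S \<and> a < x \<and> x < b \<and> (\<forall>s\<in>S. s \<le> a \<or> b \<le> s)"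
proof -
  define a where "a = Max {s\<in>S. s \<le> x}"
  define b where "b = Min {s\<in>S. x \<le> s}"
  have a: "a \<in> {s\<in>S. s \<le> x}" unfolding a_def by (rule Max_in) (use fin s0 x in auto)
  have b: "b \<in> {s\<in>S. x \<le> s}" unfolding b_def by (rule Min_in) (use fin s1 x in auto)
  have "\<forall>s\<in>S. s \<le> a \<or> b \<le> s"
  proof
    fix s assume s: "s \<in> S"
    show "s \<le> a \<or> b \<le> s"
    proof (cases "s \<le> x")
      case True then have "s \<le> a" unfolding a_def by (intro Max_ge) (use fin s in auto)
      then show ?thesis by simp
    next
      case False then have "b \<le> s" unfolding b_def by (intro Min_le) (use fin s in auto)
      then show ?thesis by simp
    qed
  qed
  moreover have "a < x" "x < b" using a b x(2) by (auto simp: order.order_iff_strict)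
  ultimately show ?thesis using a b by blast
qed

lemma grid_gap:
  assumes grid: "\<forall>j\<le>2 ^ n. real j / 2 ^ n \<in> S" and a0: "0 \<le> a" and a1: "a < 1"
    and gap: "\<forall>s\<in>S. s \<le> a \<or> b \<le> s"
  shows "b - a \<le> 1 / 2 ^ n"
proof -
  define j where "j = nat \<lfloor>a * 2 ^ n\<rfloor> + 1"
  have fl: "of_int \<lfloor>a * 2 ^ n\<rfloor> \<le> a * 2 ^ n" "a * 2 ^ n < of_int \<lfloor>a * 2 ^ n\<rfloor> + 1" by linarith+
  have fl0: "0 \<le> \<lfloor>a * 2 ^ n\<rfloor>" using a0 by simp
  have rj: "real j = of_int \<lfloor>a * 2 ^ n\<rfloor> + 1" unfolding j_def using fl0 by simp
  have "a * 2 ^ n < 2 ^ n" using a1 by simp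
  then have "\<lfloor>a * 2 ^ n\<rfloor> < 2 ^ n" by (metis floor_less_iff of_int_numeral of_int_power)
  then have "int j \<le> 2 ^ n" unfolding j_def using fl0 by simp
  then have "j \<le> 2 ^ n" by (metis of_nat_le_iff of_nat_numeral of_nat_power)
  then have jS: "real j / 2 ^ n \<in> S" using grid by simp
  have "a < real j / 2 ^ n" unfolding rj using fl(2) by (simp add: field_simps)
  then have "b \<le> real j / 2 ^ n" using gap jS by force
  moreover have "real j / 2 ^ n \<le> a + 1 / 2 ^ n" unfolding rj using fl(1) by (simp add: field_simps)
  ultimately show ?thesis by simp
qed

lemma conv_bound:
  fixes u v t1 t2 r :: real
  assumes "0 \<le> t1" "0 \<le> t2" "t1 + t2 = 1" "\<bar>u\<bar> < r" "\<bar>v\<bar> < r"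
  shows "\<bar>u * t1 + v * t2\<bar> < r"
proof -
  have "\<bar>u * t1 + v * t2\<bar> \<le> \<bar>u\<bar> * t1 + \<bar>v\<bar> * t2"
    using assms by (metis abs_mult abs_of_nonneg abs_triangle_ineq)
  also have "\<dots> \<le> max \<bar>u\<bar> \<bar>v\<bar> * t1 + max \<bar>u\<bar> \<bar>v\<bar> * t2"
    using assms by (intro add_mono mult_right_mono) auto
  also have "\<dots> = max \<bar>u\<bar> \<bar>v\<bar>" using assms(3) by (simp add: distrib_left[symmetric])
  also have "\<dots> < r" using assms by simp
  finally show ?thesis .
qed

lemma baire_of_countable:
  fixes f :: "real \<Rightarrow> real" and Ds :: "real set"
  assumes cD: "countable Ds" and cont: "\<forall>x\<in>{0..1} - Ds. continuous (at x within {0..1}) f"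
  shows "baire_class_1 f"
proof -
  define D' where "D' = insert 0 Ds"
  define e where "e = from_nat_into D'"
  have cD': "countable D'" "D' \<noteq> {}" using cD unfolding D'_def by auto
  have De: "x \<in> Ds \<Longrightarrow> \<exists>m. e m = x" for x
    unfolding e_def using from_nat_into_surj[OF cD'(1)] D'_def by blast
  define S where "S n = {real j / 2 ^ n | j. j \<le> 2 ^ n} \<union> ({0..1} \<inter> e ` {..n})" for n :: nat
  have finS: "finite (S n)" for n
  proof -
    have "{real j / 2 ^ n | j. j \<le> (2::nat) ^ n} = (\<lambda>j. real j / 2 ^ n) ` {..2 ^ n}" by auto
    then show ?thesis unfolding S_def by simp
  qed
  have subS: "S n \<subseteq> {0..1}" for n
  proof -
    have "real j / 2 ^ n \<le> 1" if "j \<le> 2 ^ n" for j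
    proof -
      have "real j \<le> 2 ^ n" using that by (metis of_nat_le_iff of_nat_numeral of_nat_power)
      then show ?thesis by simp
    qed
    then show ?thesis unfolding S_def by auto
  qed
  have gridS: "\<forall>j\<le>2 ^ n. real j / 2 ^ n \<in> S n" for n unfolding S_def by blast
  have s0: "0 \<in> S n" for n using gridS[of n] by force
  have s1: "1 \<in> S n" for n using gridS[of n] by force
  define g where "g n = interp (S n) f" for n
  have gc: "continuous_on {0..1} (g n)" for n
    unfolding g_def using interp_cont[OF finS subS] continuous_on_subset by blast
  have lim: "(\<lambda>n. g n x) \<longlonglongrightarrow> f x" if x: "x \<in> {0..1}" for x
  proof (cases "x \<in> Ds")
    case True
    then obtain m where m: "e m = x" using De by blast
    have "\<forall>\<^sub>F n in sequentially. g n x = f x"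
      unfolding eventually_sequentially
    proof (intro exI allI impI)
      fix n assume "m \<le> n"
      then have "x \<in> S n" unfolding S_def using m x by auto
      then show "g n x = f x" unfolding g_def by (rule interp_node[OF finS subS])
    qed
    then show ?thesis by (rule tendsto_eventually)
  next
    case False
    then have cx: "continuous (at x within {0..1}) f" using cont x by blast
    show ?thesis
    proof (rule LIMSEQ_I)
      fix r :: real assume r: "0 < r"
      obtain d where d: "d > 0" "\<forall>y\<in>{0..1}. dist y x < d \<longrightarrow> dist (f y) (f x) < r"
        using cx r unfolding continuous_within_eps_delta by blast
      obtain N where N: "(1/2::real) ^ N < d" using real_arch_pow_inv[OF d(1), of "1/2"] by auto
      show "\<exists>N. \<forall>n\<ge>N. norm (g n x - f x) < r"
      proof (intro exI allI impI)
        fix n assume nN: "N \<le> n"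
        show "norm (g n x - f x) < r"
        proof (cases "x \<in> S n")
          case True
          then show ?thesis unfolding g_def using interp_node[OF finS subS True] r by simp
        next
          case False
          obtain a b where ab: "a \<in> S n" "b \<in> S n" "a < x" "x < b" "\<forall>s\<in>S n. s \<le> a \<or> b \<le> s"
            using consecutive[OF finS subS s0 s1 x False] by blast
          have a01: "0 \<le> a" "a < 1" using ab(1,3) subS[of n] x by auto
          have b01: "b \<in> {0..1}" using ab(2) subS[of n] by auto
          have "b - a \<le> 1 / 2 ^ n" by (rule grid_gap[OF gridS a01 ab(5)])
          also have "\<dots> \<le> (1/2) ^ N"
          proof -
            have "(1/2::real) ^ n \<le> (1/2) ^ N" using nN by (rule power_decreasing) auto
            then show ?thesis by (simp add: power_one_over)
          qed
          finally have bad: "b - a < d" using N by linarith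
          have fa: "\<bar>f a - f x\<bar> < r" using d(2) a01 bad ab by (auto simp: dist_real_def)
          have fb: "\<bar>f b - f x\<bar> < r" using d(2) b01 bad ab by (auto simp: dist_real_def)
          define t1 where "t1 = (b - x) / (b - a)"
          define t2 where "t2 = (x - a) / (b - a)"
          have gv: "g n x = f a * t1 + f b * t2"
            unfolding g_def t1_def t2_def by (rule interp_between[OF finS subS ab])
          have s1: "t1 + t2 = 1" unfolding t1_def t2_def
          proof -
            have "b - a \<noteq> 0" using ab by simp
            then show "(b - x) / (b - a) + (x - a) / (b - a) = 1" by (simp add: add_divide_distrib[symmetric])
          qed
          have t0: "0 \<le> t1" "0 \<le> t2" unfolding t1_def t2_def using ab by auto
          have "g n x - f x = f a * t1 + f b * t2 - f x * (t1 + t2)" unfolding gv s1 by simp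
          also have "\<dots> = (f a - f x) * t1 + (f b - f x) * t2" by (simp add: algebra_simps)
          finally have "g n x - f x = (f a - f x) * t1 + (f b - f x) * t2" .
          moreover have "\<bar>(f a - f x) * t1 + (f b - f x) * t2\<bar> < r"
            using t0 s1 fa fb by (intro conv_bound) auto
          ultimately show ?thesis by simp
        qed
      qed
    qed
  qed
  show ?thesis unfolding baire_class_1_def using gc lim by blast
qed


theorem lemma3p2:
  fixes k :: nat and \<sigma> :: "bool list \<Rightarrow> bool list"
  assumes "k \<ge> 2"
    and "erasing_subst k \<sigma>"
    and "w_eps k \<sigma> \<noteq> replicate k True"
  shows "(\<forall>x \<in> C_sigma k \<sigma>. continuous (at x within {0..1}) (f_sigma k \<sigma>))
       \<and> countable ({0..1} - C_sigma k \<sigma>)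
       \<and> baire_class_1 (f_sigma k \<sigma>)
       \<and> (\<forall>q \<in> Q2 - {0}. continuous (at_left q) (f_sigma k \<sigma>))"
proof -
  have k: "0 < k" using assms(1) by simp
  note er = assms(2)
  have contC: "\<forall>x \<in> C_sigma k \<sigma>. continuous (at x within {0..1}) (f_sigma k \<sigma>)"
  proof
    fix x assume xC: "x \<in> C_sigma k \<sigma>"
    then have x01: "x \<in> {0..1}" and nQ: "x \<notin> Q2_0" and nE: "x \<notin> E_sigma k \<sigma>"
      unfolding C_sigma_def by auto
    have "x \<noteq> 0" using nQ unfolding Q2_0_def by auto
    then have x: "0 < x" "x \<le> 1" using x01 by auto
    have inf: "infinite {j. block k (tilde x) j \<noteq> w_eps k \<sigma>}"
      by (rule C_infinite[OF er k x nE])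
    show "continuous (at x within {0..1}) (f_sigma k \<sigma>)"
      unfolding continuous_within_eps_delta
    proof (intro allI impI)
      fix e :: real assume e: "0 < e"
      obtain n where n: "\<forall>y::real. 0 < y \<and> y \<le> 1 \<and> \<lceil>y * 2 ^ n\<rceil> = \<lceil>x * 2 ^ n\<rceil> \<longrightarrow>
            \<bar>f_sigma k \<sigma> y - f_sigma k \<sigma> x\<bar> < e"
        using core[OF er k x inf e] by blast
      show "\<exists>d>0. \<forall>y\<in>{0..1}. dist y x < d \<longrightarrow> dist (f_sigma k \<sigma> y) (f_sigma k \<sigma> x) < e"
      proof (cases "x = 1")
        case True
        obtain d where d: "d > 0" "\<forall>y::real. y \<le> x \<and> x - y < d \<longrightarrow> 0 < y \<and> \<lceil>y * 2 ^ n\<rceil> = \<lceil>x * 2 ^ n\<rceil>"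
          using left_nbhd[OF x, of n] by blast
        show ?thesis
        proof (intro exI conjI ballI impI)
          fix y :: real assume y: "y \<in> {0..1}" "dist y x < d"
          have "y \<le> x" "x - y < d" using y True by (auto simp: dist_real_def)
          then have h: "0 < y \<and> \<lceil>y * 2 ^ n\<rceil> = \<lceil>x * 2 ^ n\<rceil>" using d(2) by blast
          have "y \<le> 1" using y(1) by simp
          then have "\<bar>f_sigma k \<sigma> y - f_sigma k \<sigma> x\<bar> < e" using n h by blast
          then show "dist (f_sigma k \<sigma> y) (f_sigma k \<sigma> x) < e" by (simp add: dist_real_def)
        qed (rule d(1))
      next
        case False
        then have x1: "x < 1" using x by simp
        have "x \<notin> Q2" using nQ x False unfolding Q2_0_def by auto
        then obtain d where d: "d > 0" "\<forall>y::real. \<bar>y - x\<bar> < d \<longrightarrow> 0 < y \<and> \<lceil>y * 2 ^ n\<rceil> = \<lceil>x * 2 ^ n\<rceil>"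
          using two_nbhd[OF x(1) x1, of n] by blast
        show ?thesis
        proof (intro exI conjI ballI impI)
          fix y :: real assume y: "y \<in> {0..1}" "dist y x < d"
          then have "\<bar>y - x\<bar> < d" by (simp add: dist_real_def)
          then have h: "0 < y \<and> \<lceil>y * 2 ^ n\<rceil> = \<lceil>x * 2 ^ n\<rceil>" using d(2) by blast
          have "y \<le> 1" using y(1) by simp
          then have "\<bar>f_sigma k \<sigma> y - f_sigma k \<sigma> x\<bar> < e" using n h by blast
          then show "dist (f_sigma k \<sigma> y) (f_sigma k \<sigma> x) < e" by (simp add: dist_real_def)
        qed (rule d(1))
      qed
    qed
  qed
  have Q2rat: "Q2 \<subseteq> \<rat>"
  proof
    fix q assume "q \<in> Q2"
    then obtain m n :: nat where "q = real m / 2 ^ n" unfolding Q2_def by auto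
    then show "q \<in> \<rat>" by (simp add: Rats_divide)
  qed
  have sub: "{0..1} - C_sigma k \<sigma> \<subseteq> \<rat>"
    using Q2rat unfolding C_sigma_def Q2_0_def E_sigma_def by auto
  have cnt: "countable ({0..1} - C_sigma k \<sigma>)"
    by (rule countable_subset[OF sub countable_rat])
  have baire: "baire_class_1 (f_sigma k \<sigma>)"
  proof (rule baire_of_countable[OF cnt])
    show "\<forall>x\<in>{0..1} - ({0..1} - C_sigma k \<sigma>). continuous (at x within {0..1}) (f_sigma k \<sigma>)"
      using contC by auto
  qed
  have left: "\<forall>q \<in> Q2 - {0}. continuous (at_left q) (f_sigma k \<sigma>)"
  proof
    fix q assume qQ: "q \<in> Q2 - {0}"
    then have x: "0 < q" "q \<le> 1" unfolding Q2_def by auto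
    have inf: "infinite {j. block k (tilde q) j \<noteq> w_eps k \<sigma>}"
      using Q2_infinite[OF er k _ _ assms(3)] qQ by blast
    show "continuous (at_left q) (f_sigma k \<sigma>)"
      unfolding continuous_within_eps_delta
    proof (intro allI impI)
      fix e :: real assume e: "0 < e"
      obtain n where n: "\<forall>y::real. 0 < y \<and> y \<le> 1 \<and> \<lceil>y * 2 ^ n\<rceil> = \<lceil>q * 2 ^ n\<rceil> \<longrightarrow>
            \<bar>f_sigma k \<sigma> y - f_sigma k \<sigma> q\<bar> < e"
        using core[OF er k x inf e] by blast
      obtain d where d: "d > 0" "\<forall>y::real. y \<le> q \<and> q - y < d \<longrightarrow> 0 < y \<and> \<lceil>y * 2 ^ n\<rceil> = \<lceil>q * 2 ^ n\<rceil>"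
        using left_nbhd[OF x, of n] by blast
      show "\<exists>d>0. \<forall>y\<in>{..<q}. dist y q < d \<longrightarrow> dist (f_sigma k \<sigma> y) (f_sigma k \<sigma> q) < e"
      proof (intro exI conjI ballI impI)
        fix y :: real assume y: "y \<in> {..<q}" "dist y q < d"
        have "y \<le> q" "q - y < d" "y \<le> 1" using y x by (auto simp: dist_real_def)
        then have h: "0 < y \<and> \<lceil>y * 2 ^ n\<rceil> = \<lceil>q * 2 ^ n\<rceil>" using d(2) by blast
        then have "\<bar>f_sigma k \<sigma> y - f_sigma k \<sigma> q\<bar> < e" using n \<open>y \<le> 1\<close> by blast
        then show "dist (f_sigma k \<sigma> y) (f_sigma k \<sigma> q) < e" by (simp add: dist_real_def)
      qed (rule d(1))
    qed
  qed
  show ?thesis using contC cnt baire left by blast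
qed

end
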